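(* Fix $x\in\mathbb{R}^d$ and a coordinate $i$ with $g_i(x)\ne0$. Let $\hat g^1,\dots,\hat g^M$ be independent random vectors such that for each $m$, $\mathrm{Prob}(\mathrm{sign}\,\hat g^m_i=\mathrm{sign}\,g_i)=\rho_i$ and $\mathrm{Prob}(\mathrm{sign}\,\hat g^m_i=-\mathrm{sign}\,g_i)=1-\rho_i$, where $\rho_i>\tfrac12$. Let $\hat g^{(M)}:=\sum_{m=1}^M\mathrm{sign}\,\hat g^m$ and $l=\lfloor\frac{M+1}2\rfloor$. Then $$\mathbb{E}\big[\mathrm{sign}(\hat g^{(M)}_i\cdot g_i)\big]=2I(\rho_i;l,l)-1.$$ In particular this expectation is the same for $M=2l-1$ and $M=2l$.
   Context: $\mathrm{sign}\,t=1,0,-1$ for $t>0,t=0,t<0$, entrywise on vectors. $I(p;a,b)=\frac{\int_0^pt^{a-1}(1-t)^{b-1}dt}{\int_0^1t^{a-1}(1-t)^{b-1}dt}$ is the regularized incomplete beta function. *)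

theory Defs
  imports "HOL-Probability.Probability"
begin

text \<open>Entrywise sign of a vector (note: Isabelle's sgn on vectors is normalisation,
  so we define the entrywise version explicitly).\<close>
definition sign_vec :: "real ^ 'd \<Rightarrow> real ^ 'd" where
  "sign_vec v = (\<chi> j. sgn (v $ j))"

definition inc_beta :: "real \<Rightarrow> real \<Rightarrow> real \<Rightarrow> real" where
  "inc_beta p a b =
     integral {0..p} (\<lambda>t. t powr (a - 1) * (1 - t) powr (b - 1)) /
     integral {0..1} (\<lambda>t. t powr (a - 1) * (1 - t) powr (b - 1))"

end

theory Submission
  imports Defs
begin

definition T :: "nat \<Rightarrow> nat \<Rightarrow> real \<Rightarrow> real" where
  "T n j p = (\<Sum>k=j..n. real (n choose k) * p^k * (1-p)^(n-k))"

lemma term_deriv: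
  "((\<lambda>p. real (n choose k) * p^k * (1-p)^(n-k)) has_real_derivative
     real (n choose k) * (real k * p^(k-1) * (1-p)^(n-k) - p^k * (real (n-k) * (1-p)^(n-k-1)))) (at p)"
  by (auto intro!: derivative_eq_intros simp: algebra_simps)

lemma T_deriv:
  "(T n j has_real_derivative (\<Sum>k=j..n. real (n choose k) * (real k * p^(k-1) * (1-p)^(n-k) - p^k * (real (n-k) * (1-p)^(n-k-1))))) (at p)"
  unfolding T_def by (intro DERIV_sum term_deriv)

lemma telesc:
  assumes "1 \<le> j" "j \<le> n"
  shows "(\<Sum>k=j..n. real (n choose k) * (real k * p^(k-1) * (1-p)^(n-k) - p^k * (real (n-k) * (1-p)^(n-k-1))))
       = real n * real ((n-1) choose (j-1)) * p^(j-1) * (1-p)^(n-j)"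
proof -
  define a where "a k = real n * real ((n-1) choose (k-1)) * p^(k-1) * (1-p)^(n-k)" for k
  have t: "real (n choose k) * (real k * p^(k-1) * (1-p)^(n-k) - p^k * (real (n-k) * (1-p)^(n-k-1)))
      = - (a (Suc k) - a k)" if "k \<in> {j..n}" for k
  proof -
    from that assms obtain k' where k': "k = Suc k'" by (cases k) auto
    have e1: "real (n choose k) * real k = real n * real ((n-1) choose (k-1))"
    proof -
      have "Suc k' * (n choose Suc k') = n * ((n - 1) choose k')" by (rule binomial_absorption)
      then have "real (Suc k' * (n choose Suc k')) = real (n * ((n - 1) choose k'))" by (rule arg_cong)
      then show ?thesis unfolding k' of_nat_mult by (simp add: mult.commute)
    qed
    have e2: "real (n choose k) * real (n-k) = real n * real ((n-1) choose k)"
    proof -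
      have "(n - k) * (n choose k) = n * ((n - 1) choose k)" by (rule binomial_absorb_comp)
      then have "real ((n - k) * (n choose k)) = real (n * ((n - 1) choose k))" by (rule arg_cong)
      then show ?thesis unfolding of_nat_mult by (simp add: mult.commute)
    qed
    have as: "a (Suc k) = real n * real ((n-1) choose k) * p^k * (1-p)^(n-k-1)"
      unfolding a_def by simp
    have "real (n choose k) * (real k * p^(k-1) * (1-p)^(n-k) - p^k * (real (n-k) * (1-p)^(n-k-1)))
       = (real (n choose k) * real k) * (p^(k-1) * (1-p)^(n-k)) - (real (n choose k) * real (n-k)) * (p^k * (1-p)^(n-k-1))"
      by (simp only: right_diff_distrib mult.assoc mult.left_commute)
    also have "\<dots> = (real n * real ((n-1) choose (k-1))) * (p^(k-1) * (1-p)^(n-k)) - (real n * real ((n-1) choose k)) * (p^k * (1-p)^(n-k-1))"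
      by (simp only: e1 e2)
    also have "\<dots> = - (a (Suc k) - a k)"
      unfolding as by (simp add: a_def algebra_simps)
    finally show ?thesis .
  qed
  have "(\<Sum>k=j..n. real (n choose k) * (real k * p^(k-1) * (1-p)^(n-k) - p^k * (real (n-k) * (1-p)^(n-k-1))))
     = (\<Sum>k=j..n. - (a (Suc k) - a k))" by (rule sum.cong) (use t in auto)
  also have "\<dots> = - (\<Sum>k=j..n. (a (Suc k) - a k))" by (rule sum_negf)
  also have "\<dots> = - (a (Suc n) - a j)" using assms by (subst sum_Suc_diff) auto
  also have "a (Suc n) = 0" unfolding a_def using assms by simp
  finally show ?thesis unfolding a_def by simp
qed

lemma T_zero: "1 \<le> j \<Longrightarrow> T n j 0 = 0"
  unfolding T_def by (intro sum.neutral) auto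

lemma T_one: "j \<le> n \<Longrightarrow> T n j 1 = 1"
proof -
  assume "j \<le> n"
  have "T n j 1 = (\<Sum>k=j..n. if k = n then 1 else 0)"
    unfolding T_def by (intro sum.cong) auto
  also have "\<dots> = 1" using \<open>j \<le> n\<close> by simp
  finally show ?thesis .
qed

lemma inc_beta_T:
  assumes l: "1 \<le> l" and p: "0 \<le> p" "p \<le> 1"
  shows "inc_beta p (real l) (real l) = T (2*l-1) l p"
proof -
  define n where "n = 2*l-1"
  define c where "c = real n * real ((n-1) choose (l-1))"
  have nl: "n - l = l - 1" "1 \<le> l" "l \<le> n" using l unfolding n_def by auto
  have c0: "c > 0" unfolding c_def using nl by auto
  define f where "f t = t^(l-1) * (1-t)^(l-1)" for t :: real
  have der: "((\<lambda>t. T n l t / c) has_real_derivative f t) (at t)" for t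
  proof -
    have e: "(\<Sum>k=l..n. real (n choose k) * (real k * t^(k-1) * (1-t)^(n-k) - t^k * (real (n-k) * (1-t)^(n-k-1)))) = c * f t"
      using telesc[of l n t] nl unfolding c_def f_def by (simp add: mult.assoc)
    have "((\<lambda>t. T n l t / c) has_real_derivative (c * f t) / c) (at t)"
      using DERIV_cdivide[OF T_deriv[of n l t], of c] unfolding e .
    then show ?thesis using c0 by simp
  qed
  have ftc: "(f has_integral (T n l b / c)) {0..b}" if "0 \<le> b" for b
  proof -
    have "(f has_integral (T n l b / c - T n l 0 / c)) {0..b}"
      by (rule fundamental_theorem_of_calculus[OF that])
        (use der in \<open>auto simp: has_real_derivative_iff_has_vector_derivative[symmetric] intro: has_field_derivative_at_within\<close>)
    then show ?thesis using T_zero[OF nl(2)] by simp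
  qed
  define h where "h t = t powr (real l - 1) * (1 - t) powr (real l - 1)" for t :: real
  have hf: "h t = f t" if "t \<in> {0..b} - {0,1}" "b \<le> 1" for t b
  proof -
    have "0 < t" "0 < 1 - t" using that by auto
    moreover have e: "real l - 1 = real (l - 1)" using l by (simp add: of_nat_diff)
    ultimately have "t powr (real l - 1) = t ^ (l-1)" "(1-t) powr (real l - 1) = (1-t) ^ (l-1)"
      by (simp_all only: e powr_realpow)
    then show ?thesis unfolding h_def f_def by simp
  qed
  have hi: "(h has_integral (T n l b / c)) {0..b}" if "0 \<le> b" "b \<le> 1" for b
    by (rule has_integral_spike_finite[of "{0,1}", OF _ _ ftc[OF that(1)]]) (use hf that in auto)
  have "inc_beta p (real l) (real l) = integral {0..p} h / integral {0..1} h"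
    unfolding inc_beta_def h_def by (rule refl)
  also have "\<dots> = (T n l p / c) / (T n l 1 / c)"
    using integral_unique[OF hi[OF p]] integral_unique[OF hi[of 1]] by simp
  also have "\<dots> = T n l p" using c0 by (simp add: T_one[OF nl(3)])
  finally show ?thesis unfolding n_def .
qed


lemma binom_step:
  fixes p q :: real
  shows "(\<Sum>k=0..Suc n. w k * real (Suc n choose k) * p^k * q^(Suc n - k))
       = (\<Sum>k=0..n. real (n choose k) * p^k * q^(n-k) * (p * w (Suc k) + q * w k))"
proof -
  have R: "(\<Sum>k=0..n. real (n choose k) * p^k * q^(n-k) * (p * w (Suc k) + q * w k))
     = (\<Sum>k=0..n. w (Suc k) * real (n choose k) * p^(Suc k) * q^(n-k))
     + (\<Sum>k=0..n. w k * real (n choose k) * p^k * q^(Suc n-k))"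
    by (simp add: sum.distrib[symmetric] algebra_simps Suc_diff_le)
  have "(\<Sum>k=0..n. w k * real (n choose k) * p^k * q^(Suc n-k))
      = (\<Sum>k=0..Suc n. w k * real (n choose k) * p^k * q^(Suc n-k))"
    by (simp add: sum.atLeast0_atMost_Suc)
  also have "\<dots> = w 0 * q^(Suc n) + (\<Sum>k=0..n. w (Suc k) * real (n choose Suc k) * p^(Suc k) * q^(n-k))"
    by (subst sum.atLeast0_atMost_Suc_shift) simp
  finally have R2: "(\<Sum>k=0..n. w k * real (n choose k) * p^k * q^(Suc n-k)) = \<dots>" .
  have "(\<Sum>k=0..Suc n. w k * real (Suc n choose k) * p^k * q^(Suc n - k))
      = w 0 * q^(Suc n) + (\<Sum>k=0..n. w (Suc k) * real (Suc n choose Suc k) * p^(Suc k) * q^(n-k))"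
    by (subst sum.atLeast0_atMost_Suc_shift) simp
  also have "\<dots> = w 0 * q^(Suc n) + (\<Sum>k=0..n. w (Suc k) * real (n choose k) * p^(Suc k) * q^(n-k))
      + (\<Sum>k=0..n. w (Suc k) * real (n choose Suc k) * p^(Suc k) * q^(n-k))"
    by (simp add: sum.distrib[symmetric] algebra_simps)
  finally show ?thesis using R R2 by simp
qed

definition E :: "nat \<Rightarrow> real \<Rightarrow> real" where
  "E M p = (\<Sum>k=0..M. real (M choose k) * sgn (2 * real k - real M) * p^k * (1-p)^(M-k))"

lemma binom_sum: "(\<Sum>k=0..n. real (n choose k) * p^k * (1-p)^(n-k)) = 1"
  using binomial_ring[of p "1-p" n] by (simp add: mult.assoc atLeast0AtMost)

lemma E_odd:
  assumes "1 \<le> l"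
  shows "E (2*l-1) p = 2 * T (2*l-1) l p - 1"
proof -
  define n where "n = 2*l-1"
  define b where "b k = real (n choose k) * p^k * (1-p)^(n-k)" for k
  have "E n p = (\<Sum>k=0..n. 2 * (if l \<le> k then b k else 0) - b k)"
    unfolding E_def b_def using assms
    by (intro sum.cong) (auto simp: n_def of_nat_diff)
  also have "\<dots> = 2 * (\<Sum>k=0..n. (if l \<le> k then b k else 0)) - (\<Sum>k=0..n. b k)"
    by (simp add: sum_subtractf sum_distrib_left)
  also have "(\<Sum>k=0..n. (if l \<le> k then b k else 0)) = sum b {k\<in>{0..n}. l \<le> k}"
    by (rule sum.inter_filter[symmetric]) simp
  also have "{k\<in>{0..n}. l \<le> k} = {l..n}" by auto
  also have "sum b {l..n} = T n l p" unfolding T_def b_def ..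
  also have "(\<Sum>k=0..n. b k) = 1" unfolding b_def by (rule binom_sum)
  finally show ?thesis unfolding n_def .
qed

lemma E_even:
  assumes "1 \<le> l"
  shows "E (2*l) p = E (2*l-1) p"
proof -
  define n where "n = 2*l-1"
  have Sn: "2*l = Suc n" using assms unfolding n_def by simp
  define q where "q = 1 - p"
  define b where "b k = real (n choose k) * p^k * q^(n-k)" for k
  define w where "w k = sgn (2 * real k - real (Suc n))" for k
  have "E (2*l) p = (\<Sum>k=0..Suc n. w k * real (Suc n choose k) * p^k * q^(Suc n - k))"
    unfolding E_def Sn w_def q_def by (simp add: algebra_simps)
  also have "\<dots> = (\<Sum>k=0..n. b k * (p * w (Suc k) + q * w k))"
    unfolding binom_step b_def ..
  also have "\<dots> = (\<Sum>k=0..n. b k * sgn (2 * real k - real n)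
       + ((if k = l-1 then b k * p else 0) - (if k = l then b k * q else 0)))"
  proof (intro sum.cong refl)
    fix k assume "k \<in> {0..n}"
    consider "k + 2 \<le> l" | "k = l - 1" | "k = l" | "l < k" by linarith
    then show "b k * (p * w (Suc k) + q * w k) = b k * sgn (2 * real k - real n)
       + ((if k = l-1 then b k * p else 0) - (if k = l then b k * q else 0))"
    proof cases
      case 1 then have "w (Suc k) = -1" "w k = -1" "sgn (2 * real k - real n) = -1"
        unfolding w_def n_def using assms by (auto simp: of_nat_diff)
      then show ?thesis using 1 assms by (auto simp: q_def algebra_simps)
    next
      case 2 then have "w (Suc k) = 0" "w k = -1" "sgn (2 * real k - real n) = -1"
        unfolding w_def n_def using assms by (auto simp: of_nat_diff)
      then show ?thesis using 2 assms by (auto simp: q_def algebra_simps)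
    next
      case 3 then have "w (Suc k) = 1" "w k = 0" "sgn (2 * real k - real n) = 1"
        unfolding w_def n_def using assms by (auto simp: of_nat_diff)
      then show ?thesis using 3 assms by (auto simp: q_def algebra_simps)
    next
      case 4 then have "w (Suc k) = 1" "w k = 1" "sgn (2 * real k - real n) = 1"
        unfolding w_def n_def using assms by (auto simp: of_nat_diff)
      then show ?thesis using 4 assms by (auto simp: q_def algebra_simps)
    qed
  qed
  also have "\<dots> = (\<Sum>k=0..n. b k * sgn (2 * real k - real n))
       + ((\<Sum>k=0..n. if k = l-1 then b k * p else 0) - (\<Sum>k=0..n. if k = l then b k * q else 0))"
    by (simp only: sum.distrib sum_subtractf)
  also have "(\<Sum>k=0..n. b k * sgn (2 * real k - real n)) = E n p"
    unfolding E_def b_def q_def by (simp add: mult.commute mult.left_commute)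
  also have "(\<Sum>k=0..n. if k = l-1 then b k * p else 0) = b (l-1) * p"
    using assms by (simp add: n_def)
  also have "(\<Sum>k=0..n. if k = l then b k * q else 0) = b l * q"
    using assms by (simp add: n_def)
  also have "b (l-1) * p - b l * q = 0"
  proof -
    obtain l' where l': "l = Suc l'" using assms by (cases l) auto
    have c: "n choose l' = n choose l"
      using binomial_symmetric[of l' n] l' by (simp add: n_def)
    have "n - l' = Suc l'" "n - l = l'" using l' by (auto simp: n_def)
    then show ?thesis unfolding b_def l' using c l' by (simp add: algebra_simps)
  qed
  finally show ?thesis unfolding n_def by simp
qed



lemma E_inc_beta:
  assumes "1 \<le> M" "0 \<le> p" "p \<le> 1"
  shows "E M p = 2 * inc_beta p (real ((M + 1) div 2)) (real ((M + 1) div 2)) - 1"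
proof -
  define l where "l = (M + 1) div 2"
  have l1: "1 \<le> l" using assms unfolding l_def by auto
  have "E M p = E (2*l-1) p"
  proof (cases "even M")
    case True
    then have "M = 2*l" unfolding l_def by auto
    then show ?thesis using E_even[OF l1] by simp
  next
    case False
    then have "M = 2*l-1" unfolding l_def by presburger
    then show ?thesis by simp
  qed
  also have "\<dots> = 2 * T (2*l-1) l p - 1" by (rule E_odd[OF l1])
  also have "T (2*l-1) l p = inc_beta p (real l) (real l)"
    using inc_beta_T[OF l1 assms(2,3)] by simp
  finally show ?thesis unfolding l_def .
qed

lemma sum_Pow_card:
  fixes h :: "nat \<Rightarrow> real"
  assumes "finite I"
  shows "(\<Sum>B\<in>Pow I. h (card B)) = (\<Sum>k=0..card I. real (card I choose k) * h k)"
proof -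
  have "(\<Sum>B\<in>Pow I. h (card B)) = (\<Sum>k\<in>{0..card I}. \<Sum>B\<in>{B. B \<in> Pow I \<and> card B = k}. h (card B))"
    by (rule sum.group[symmetric]) (use assms in \<open>auto intro: card_mono\<close>)
  also have "\<dots> = (\<Sum>k\<in>{0..card I}. real (card I choose k) * h k)"
  proof (rule sum.cong[OF refl])
    fix k
    have "(\<Sum>B\<in>{B. B \<in> Pow I \<and> card B = k}. h (card B)) = (\<Sum>B\<in>{B. B \<subseteq> I \<and> card B = k}. h k)"
      by (rule sum.cong) auto
    also have "\<dots> = real (card I choose k) * h k" using n_subsets[OF assms, of k] by simp
    finally show "(\<Sum>B\<in>{B. B \<in> Pow I \<and> card B = k}. h (card B)) = real (card I choose k) * h k" .
  qed
  finally show ?thesis .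
qed


theorem mainTheorem4:
  fixes N :: "'a measure"
    and g :: "real ^ 'd \<Rightarrow> real ^ 'd"
    and x :: "real ^ 'd"
    and i :: 'd
    and ghat :: "nat \<Rightarrow> 'a \<Rightarrow> real ^ 'd"
    and M :: nat
    and \<rho> :: real
  assumes "prob_space N"
    and "g x $ i \<noteq> 0"
    and "M \<ge> 1"
    and "prob_space.indep_vars N (\<lambda>_. borel) ghat {1..M}"
    and "\<And>m. m \<in> {1..M} \<Longrightarrow>
           measure N {\<omega> \<in> space N. sgn (ghat m \<omega> $ i) = sgn (g x $ i)} = \<rho>"
    and "\<And>m. m \<in> {1..M} \<Longrightarrow>
           measure N {\<omega> \<in> space N. sgn (ghat m \<omega> $ i) = - sgn (g x $ i)} = 1 - \<rho>"
    and "\<rho> > 1/2"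
  shows "prob_space.expectation N
           (\<lambda>\<omega>. sgn ((\<Sum>m\<in>{1..M}. sign_vec (ghat m \<omega>)) $ i * g x $ i))
         = 2 * inc_beta \<rho> (real ((M + 1) div 2)) (real ((M + 1) div 2)) - 1"
proof -
  interpret prob_space N by fact
  define I where "I = {1..M}"
  define s where "s = sgn (g x $ i)"
  have s: "s = 1 \<or> s = -1" unfolding s_def using assms(2) by (auto simp: sgn_real_def)
  have sne: "s \<noteq> - s" "s * s = 1" using s by auto
  have fin: "finite I" "I \<noteq> {}" "card I = M" unfolding I_def using assms(3) by auto
  define X where "X m \<omega> = sgn (ghat m \<omega> $ i)" for m \<omega>
  have rv: "ghat m \<in> borel_measurable N" if "m \<in> I" for m
    using assms(4) that unfolding I_def indep_vars_def by auto
  have comp: "(\<lambda>v::real^'d. v $ i) \<in> borel_measurable borel"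
    by (intro borel_measurable_continuous_onI continuous_on_component continuous_on_id)
  have Xm: "X m \<in> borel_measurable N" if "m \<in> I" for m
    unfolding X_def using measurable_comp[OF rv[OF that] comp] by (simp add: comp_def)
  define A where "A v = {u :: real^'d. sgn (u $ i) = v}" for v
  have Asets: "A v \<in> sets borel" for v
  proof -
    have "(\<lambda>u::real^'d. sgn (u $ i)) \<in> borel_measurable borel" using comp by measurable
    from measurable_sets[OF this, of "{v}"] show ?thesis unfolding A_def by (simp add: vimage_def)
  qed
  have pre: "ghat m -` A v \<inter> space N = {\<omega> \<in> space N. X m \<omega> = v}" for m v
    unfolding A_def X_def by auto
  have Xev: "{\<omega> \<in> space N. X m \<omega> = v} \<in> events" if "m \<in> I" for m v
    using measurable_sets[OF rv[OF that] Asets[of v]] pre by simp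
  have Ps: "prob {\<omega> \<in> space N. X m \<omega> = s} = \<rho>" if "m \<in> I" for m
    using assms(5) that unfolding I_def X_def s_def by simp
  have Pms: "prob {\<omega> \<in> space N. X m \<omega> = - s} = 1 - \<rho>" if "m \<in> I" for m
    using assms(6) that unfolding I_def X_def s_def by simp
  have "1 \<in> I" unfolding I_def using assms(3) by auto
  then have rho1: "\<rho> \<le> 1" using Pms[of 1] measure_nonneg[of N "{\<omega> \<in> space N. X 1 \<omega> = - s}"] by linarith
  have AE1: "AE \<omega> in N. \<forall>m\<in>I. X m \<omega> = s \<or> X m \<omega> = - s"
  proof (rule AE_finite_allI[OF fin(1)])
    fix m assume m: "m \<in> I"
    have "prob ({\<omega> \<in> space N. X m \<omega> = s} \<union> {\<omega> \<in> space N. X m \<omega> = - s}) = \<rho> + (1 - \<rho>)"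
    proof -
      have "{\<omega> \<in> space N. X m \<omega> = s} \<inter> {\<omega> \<in> space N. X m \<omega> = - s} = {}" using sne by auto
      from finite_measure_Union[OF Xev[OF m] Xev[OF m] this] show ?thesis using Ps[OF m] Pms[OF m] by simp
    qed
    then have "AE \<omega> in N. \<omega> \<in> {\<omega> \<in> space N. X m \<omega> = s} \<union> {\<omega> \<in> space N. X m \<omega> = - s}"
      by (intro AE_prob_1) simp
    then show "AE \<omega> in N. X m \<omega> = s \<or> X m \<omega> = - s" by (rule AE_mp) auto
  qed
  define \<epsilon> where "\<epsilon> B m = (if m \<in> B then s else - s)" for B :: "nat set" and m :: nat
  define Ev where "Ev B = (\<Inter>m\<in>I. ghat m -` A (\<epsilon> B m) \<inter> space N)" for B
  have Evsets: "Ev B \<in> events" for B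
    unfolding Ev_def using fin(2) by (intro sets.finite_INT fin(1)) (auto intro: measurable_sets[OF rv Asets])
  have PEv: "prob (Ev B) = \<rho> ^ card B * (1 - \<rho>) ^ (M - card B)" if B: "B \<subseteq> I" for B
  proof -
    have "prob (Ev B) = (\<Prod>m\<in>I. prob (ghat m -` A (\<epsilon> B m) \<inter> space N))"
      unfolding Ev_def
      by (rule indep_varsD_finite[OF assms(4)[folded I_def] fin(2,1) Asets])
    also have "\<dots> = (\<Prod>m\<in>I. if m \<in> B then \<rho> else 1 - \<rho>)"
      by (rule prod.cong[OF refl]) (auto simp: pre \<epsilon>_def Ps Pms)
    also have "\<dots> = \<rho> ^ card (I \<inter> B) * (1 - \<rho>) ^ card (I - B)"
      using fin(1) by (simp add: prod.If_cases Diff_eq)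
    also have "card (I \<inter> B) = card B" using B by (simp add: Int_absorb1)
    also have "card (I - B) = M - card B" using B fin by (simp add: card_Diff_subset finite_subset)
    finally show ?thesis .
  qed
  define c where "c B = sgn (2 * real (card B) - real M)" for B :: "nat set"
  define F where "F \<omega> = sgn ((\<Sum>m\<in>{1..M}. sign_vec (ghat m \<omega>)) $ i * g x $ i)" for \<omega>
  have F_eq: "F = (\<lambda>\<omega>. sgn ((\<Sum>m\<in>I. X m \<omega>) * g x $ i))"
    unfolding F_def X_def I_def sign_vec_def by (simp add: sum_component)
  have Fm: "F \<in> borel_measurable N" unfolding F_eq using Xm by measurable
  define G where "G \<omega> = (\<Sum>B\<in>Pow I. c B * indicator (Ev B) \<omega>)" for \<omega>
  have Gm: "G \<in> borel_measurable N" unfolding G_def using Evsets by measurable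
  have FG: "AE \<omega> in N. F \<omega> = G \<omega>"
    using AE1
  proof (rule AE_mp, intro AE_I2 impI)
    fix \<omega> assume \<omega>: "\<omega> \<in> space N" and all: "\<forall>m\<in>I. X m \<omega> = s \<or> X m \<omega> = - s"
    define B\<omega> where "B\<omega> = {m \<in> I. X m \<omega> = s}"
    have Bsub: "B\<omega> \<subseteq> I" unfolding B\<omega>_def by auto
    have sumX: "(\<Sum>m\<in>I. X m \<omega>) = s * (2 * real (card B\<omega>) - real M)"
    proof -
      have "(\<Sum>m\<in>I. X m \<omega>) = (\<Sum>m\<in>I. if m \<in> B\<omega> then s else - s)"
        by (rule sum.cong[OF refl]) (use all in \<open>auto simp: B\<omega>_def\<close>)
      also have "\<dots> = s * real (card (I \<inter> B\<omega>)) - s * real (card (I - B\<omega>))"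
        using fin(1) by (simp add: sum.If_cases Diff_eq)
      also have "card (I \<inter> B\<omega>) = card B\<omega>" using Bsub by (simp add: Int_absorb1)
      also have "real (card (I - B\<omega>)) = real M - real (card B\<omega>)"
      proof -
        have "card B\<omega> \<le> M" using card_mono[OF fin(1) Bsub] fin(3) by simp
        then show ?thesis using Bsub fin by (simp add: card_Diff_subset finite_subset of_nat_diff)
      qed
      finally show ?thesis by (simp add: algebra_simps)
    qed
    have Fw: "F \<omega> = c B\<omega>"
    proof -
      have "F \<omega> = sgn (s * (2 * real (card B\<omega>) - real M) * g x $ i)" unfolding F_eq sumX ..
      also have "\<dots> = s * c B\<omega> * s" unfolding c_def s_def by (simp add: sgn_mult)
      finally show ?thesis using sne by (simp add: algebra_simps)
    qed
    have ind: "indicator (Ev B) \<omega> = (if B = B\<omega> then 1 else (0::real))" if B: "B \<subseteq> I" for B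
    proof -
      have "\<omega> \<in> Ev B \<longleftrightarrow> (\<forall>m\<in>I. X m \<omega> = \<epsilon> B m)"
        unfolding Ev_def A_def X_def using \<omega> fin(2) by auto
      also have "\<dots> \<longleftrightarrow> B = B\<omega>"
      proof
        assume h: "\<forall>m\<in>I. X m \<omega> = \<epsilon> B m"
        show "B = B\<omega>"
        proof (rule set_eqI)
          fix m
          show "m \<in> B \<longleftrightarrow> m \<in> B\<omega>"
          proof (cases "m \<in> I")
            case True
            then have "X m \<omega> = \<epsilon> B m" using h by blast
            then show ?thesis unfolding B\<omega>_def \<epsilon>_def using True sne(1)
              by (cases "m \<in> B") auto
          next
            case False
            then show ?thesis using B unfolding B\<omega>_def by auto
          qed
        qed
      next
        assume "B = B\<omega>"
        then show "\<forall>m\<in>I. X m \<omega> = \<epsilon> B m" using all by (auto simp: \<epsilon>_def B\<omega>_def)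
      qed
      finally show ?thesis by (simp add: indicator_def)
    qed
    have "G \<omega> = (\<Sum>B\<in>Pow I. if B = B\<omega> then c B else 0)"
      unfolding G_def by (rule sum.cong[OF refl]) (simp add: ind)
    also have "\<dots> = c B\<omega>" using Bsub fin(1) by simp
    finally show "F \<omega> = G \<omega>" using Fw by simp
  qed
  have "expectation F = expectation G" by (rule integral_cong_AE[OF Fm Gm FG])
  also have "\<dots> = (\<Sum>B\<in>Pow I. c B * prob (Ev B))"
    unfolding G_def
  proof (rule trans[OF Bochner_Integration.integral_sum[where I="Pow I" and f="\<lambda>B \<omega>. c B * indicator (Ev B) \<omega>"]])
    show "integrable N (\<lambda>\<omega>. c B * indicator (Ev B) \<omega>)" for B
      using Evsets[of B] by (intro integrable_mult_right integrable_real_indicator) (auto simp: emeasure_eq_measure)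
    show "(\<Sum>B\<in>Pow I. integral\<^sup>L N (\<lambda>\<omega>. c B * indicator (Ev B) \<omega>)) = (\<Sum>B\<in>Pow I. c B * prob (Ev B))"
      using Evsets by (intro sum.cong refl) (simp add: Int_absorb2 sets.sets_into_space)
  qed
  also have "\<dots> = (\<Sum>B\<in>Pow I. c B * (\<rho> ^ card B * (1 - \<rho>) ^ (M - card B)))"
    by (rule sum.cong[OF refl]) (simp add: PEv)
  also have "\<dots> = (\<Sum>k=0..M. real (M choose k) * (sgn (2 * real k - real M) * (\<rho> ^ k * (1 - \<rho>) ^ (M - k))))"
    unfolding c_def using sum_Pow_card[OF fin(1), of "\<lambda>k. sgn (2 * real k - real M) * (\<rho> ^ k * (1 - \<rho>) ^ (M - k))"] fin(3)
    by simp
  also have "\<dots> = E M \<rho>" unfolding E_def by (simp add: mult.assoc)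
  also have "\<dots> = 2 * inc_beta \<rho> (real ((M + 1) div 2)) (real ((M + 1) div 2)) - 1"
    by (rule E_inc_beta) (use assms(3,7) rho1 in auto)
  finally show ?thesis unfolding F_def .
qed

end
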